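(* In the setting of the context, let $c_p(\epsilon)$, $p\in\mathrm{JK}$, be arbitrary functions of $\epsilon$ independent of $\mathbf t$, and let $\mathcal F_\alpha(\mathbf t,\epsilon)=\sum_{p\in\mathrm{JK}}c_p(\epsilon)e^{-H_\epsilon(p)}$ (a generic solution of the classical equivariant cohomology relations). Then $\hat I_{X_{\mathbf t}}\cdot\mathcal F_\alpha(\mathbf t,\epsilon)$ is a formal solution of the equivariant Picard–Fuchs equations, i.e.\ $\mathrm{PF}^{\mathrm{eq}}_\gamma\,\hat I_{X_{\mathbf t}}\cdot\mathcal F_\alpha=0$ for all $\gamma\in\Lambda$.
   Context: $Q=(Q^a_i)$ integer $r\times N$ matrix with columns $Q_i$; chamber $\mathcal K\ni\mathbf t$ of regular values of $\mu^a(Z)=\sum_iQ^a_i|Z^i|^2$; $X_{\mathbf t}=\mu^{-1}(\mathbf t)/U(1)^r$ smooth. JK $=\{p=(i_1,\dots,i_r):\mathcal K\subseteq\mathrm{Cone}(Q_{i_1},\dots,Q_{i_r})\}$, $Q_p=(Q_{i_1}|\cdots|Q_{i_r})$ (invertible over $\mathbb{Z}$), $H_\epsilon(p)=\sum_{a,b}\epsilon_{i_b}(Q_p^{-1})^b_at^a$. $\Lambda=\mathcal K^\vee\cap\mathbb{Z}^r$, $\mathcal K^\vee=\{\mathbf d:\sum_ad_at^a\ge0\ \forall\mathbf t\in\mathcal K\}$. $\mathcal D_i=\epsilon_i+\sum_aQ^a_i\partial/\partial t^a$; Pochhammer $(z)_n=\Gamma(z+n)/\Gamma(z)$. Givental operator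 $\hat I_{X_{\mathbf t}}=\sum_{\mathbf d\in\Lambda}e^{-\lambda\sum_ad_at^a}\prod_{i=1}^N(\mathcal D_i/\lambda)_{-\sum_ad_aQ^a_i}$. Equivariant Picard–Fuchs operators $\mathrm{PF}^{\mathrm{eq}}_\gamma=\prod_{\{i:\sum_a\gamma_aQ^a_i>0\}}(\mathcal D_i/\lambda)_{\sum_a\gamma_aQ^a_i}-e^{-\lambda\sum_a\gamma_at^a}\prod_{\{i:\sum_a\gamma_aQ^a_i\le0\}}(\mathcal D_i/\lambda)_{-\sum_a\gamma_aQ^a_i}$. *)

theory Defs
  imports "HOL-Analysis.Analysis"
begin

text \<open>Conventions. The charge matrix Q is an integer r x N matrix of type int^'n^'r,
  with entry Q$a$i = Q^a_i (rows a :: 'r, columns i :: 'n). A tuple p = (i_1,...,i_r)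
  is a map p :: 'n^'r, b |-> i_b.\<close>

definition col :: "int^'n^'r \<Rightarrow> 'n \<Rightarrow> real^'r" where
  "col Q i = (\<chi> a. real_of_int (Q$a$i))"

definition moment :: "int^'n^'r \<Rightarrow> complex^'n \<Rightarrow> real^'r" where
  "moment Q Z = (\<chi> a. \<Sum>i\<in>UNIV. real_of_int (Q$a$i) * (cmod (Z$i))^2)"

definition regvals :: "int^'n^'r \<Rightarrow> (real^'r) set" where
  "regvals Q = {t. t \<in> range (moment Q) \<and>
     (\<forall>Z. moment Q Z = t \<longrightarrow> (\<exists>D. (moment Q has_derivative D) (at Z) \<and> surj D))}"

definition is_chamber :: "int^'n^'r \<Rightarrow> (real^'r) set \<Rightarrow> bool" where
  "is_chamber Q K \<longleftrightarrow> (\<exists>t\<in>regvals Q. K = connected_component_set (regvals Q) t)"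

definition Qp :: "int^'n^'r \<Rightarrow> 'n^'r \<Rightarrow> int^'r^'r" where
  "Qp Q p = (\<chi> a b. Q$a$(p$b))"

definition cone_p :: "int^'n^'r \<Rightarrow> 'n^'r \<Rightarrow> (real^'r) set" where
  "cone_p Q p = {x. \<exists>c::real^'r. (\<forall>b. c$b \<ge> 0) \<and> x = (\<Sum>b\<in>UNIV. c$b *\<^sub>R col Q (p$b))}"

definition JK :: "int^'n^'r \<Rightarrow> (real^'r) set \<Rightarrow> ('n^'r) set" where
  "JK Q K = {p. K \<subseteq> cone_p Q p}"

definition Lambda :: "(real^'r) set \<Rightarrow> (int^'r) set" where
  "Lambda K = {d. \<forall>t\<in>K. (\<Sum>a\<in>UNIV. real_of_int (d$a) * t$a) \<ge> 0}"

definition Hcoef :: "int^'n^'r \<Rightarrow> complex^'n \<Rightarrow> 'n^'r \<Rightarrow> complex^'r" where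
  "Hcoef Q \<epsilon> p = (\<chi> a. \<Sum>b\<in>UNIV. \<epsilon>$(p$b) * of_int ((matrix_inv (Qp Q p))$b$a))"

definition H_eps :: "int^'n^'r \<Rightarrow> complex^'n \<Rightarrow> 'n^'r \<Rightarrow> real^'r \<Rightarrow> complex" where
  "H_eps Q \<epsilon> p t = (\<Sum>a\<in>UNIV. Hcoef Q \<epsilon> p $ a * of_real (t$a))"

text \<open>Formal exponential series in t: a function f :: complex^'r => complex stands for
  the formal sum  sum_kappa f(kappa) * exp(sum_a kappa_a t^a).  fexp kappa is exp(kappa . t).\<close>
type_synonym 'r fseries = "complex^'r \<Rightarrow> complex"

definition fexp :: "complex^'r \<Rightarrow> 'r fseries" where
  "fexp \<kappa> = (\<lambda>\<kappa>'. if \<kappa>' = \<kappa> then 1 else 0)"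

text \<open>Eigenvalue of D_i = eps_i + sum_a Q^a_i d/dt^a on exp(kappa . t).\<close>
definition Deig :: "int^'n^'r \<Rightarrow> complex^'n \<Rightarrow> 'n \<Rightarrow> complex^'r \<Rightarrow> complex" where
  "Deig Q \<epsilon> i \<kappa> = \<epsilon>$i + (\<Sum>a\<in>UNIV. of_int (Q$a$i) * \<kappa>$a)"

definition D_op :: "int^'n^'r \<Rightarrow> complex^'n \<Rightarrow> 'n \<Rightarrow> 'r fseries \<Rightarrow> 'r fseries" where
  "D_op Q \<epsilon> i f = (\<lambda>\<kappa>. Deig Q \<epsilon> i \<kappa> * f \<kappa>)"

text \<open>Pochhammer (z)_n = Gamma(z+n)/Gamma(z) for integer n, as a rational function of z:
  z(z+1)...(z+n-1) for n >= 0 and 1/((z-1)(z-2)...(z+n)) for n < 0.\<close>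
definition poch_int :: "complex \<Rightarrow> int \<Rightarrow> complex" where
  "poch_int z n = (if n \<ge> 0 then pochhammer z (nat n)
                   else 1 / (\<Prod>k\<in>{1..nat (-n)}. z - of_nat k))"

text \<open>The operator product prod_{i in S} (D_i/lambda)_{n_i} (the factors commute and act
  diagonally on exponentials).\<close>
definition poch_prod_op :: "int^'n^'r \<Rightarrow> complex^'n \<Rightarrow> complex \<Rightarrow> 'n set \<Rightarrow> ('n \<Rightarrow> int)
    \<Rightarrow> 'r fseries \<Rightarrow> 'r fseries" where
  "poch_prod_op Q \<epsilon> lam S n f = (\<lambda>\<kappa>. (\<Prod>i\<in>S. poch_int (Deig Q \<epsilon> i \<kappa> / lam) (n i)) * f \<kappa>)"

text \<open>Multiplication by exp(- lambda sum_a d_a t^a).\<close>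
definition expmul :: "complex \<Rightarrow> int^'r \<Rightarrow> 'r fseries \<Rightarrow> 'r fseries" where
  "expmul lam d f = (\<lambda>\<kappa>. f (\<kappa> + (\<chi> a. lam * of_int (d$a))))"

definition dQ :: "int^'n^'r \<Rightarrow> int^'r \<Rightarrow> 'n \<Rightarrow> int" where
  "dQ Q d i = (\<Sum>a\<in>UNIV. d$a * Q$a$i)"

definition Ihat :: "int^'n^'r \<Rightarrow> (real^'r) set \<Rightarrow> complex^'n \<Rightarrow> complex
    \<Rightarrow> 'r fseries \<Rightarrow> 'r fseries" where
  "Ihat Q K \<epsilon> lam f = (\<lambda>\<kappa>. \<Sum>\<^sub>\<infinity>d\<in>Lambda K.
      expmul lam d (poch_prod_op Q \<epsilon> lam UNIV (\<lambda>i. - dQ Q d i) f) \<kappa>)"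

definition PF :: "int^'n^'r \<Rightarrow> complex^'n \<Rightarrow> complex \<Rightarrow> int^'r \<Rightarrow> 'r fseries \<Rightarrow> 'r fseries" where
  "PF Q \<epsilon> lam \<gamma> f = (\<lambda>\<kappa>.
      poch_prod_op Q \<epsilon> lam {i. dQ Q \<gamma> i > 0} (\<lambda>i. dQ Q \<gamma> i) f \<kappa>
    - expmul lam \<gamma> (poch_prod_op Q \<epsilon> lam {i. dQ Q \<gamma> i \<le> 0} (\<lambda>i. - dQ Q \<gamma> i) f) \<kappa>)"

definition F_alpha :: "int^'n^'r \<Rightarrow> (real^'r) set \<Rightarrow> complex^'n
    \<Rightarrow> ('n^'r \<Rightarrow> complex^'n \<Rightarrow> complex) \<Rightarrow> 'r fseries" where
  "F_alpha Q K \<epsilon> c = (\<lambda>\<kappa>. \<Sum>p\<in>JK Q K. c p \<epsilon> * fexp (- Hcoef Q \<epsilon> p) \<kappa>)"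

text \<open>Genericity of the equivariant parameters (so that all Pochhammer symbols with negative
  index occurring are finite): for p in JK and i not among i_1..i_r, the eigenvalue of
  D_i/lambda on exp(-H_eps(p)) is not an integer.\<close>
definition generic_eps :: "int^'n^'r \<Rightarrow> (real^'r) set \<Rightarrow> complex^'n \<Rightarrow> complex \<Rightarrow> bool" where
  "generic_eps Q K \<epsilon> lam \<longleftrightarrow> (\<forall>p\<in>JK Q K. \<forall>i. (\<forall>b. p$b \<noteq> i) \<longrightarrow>
      Deig Q \<epsilon> i (- Hcoef Q \<epsilon> p) / lam \<notin> \<int>)"

end

theory Submission
  imports Defs
begin


lemma pochhammer_shift_prod:
  "pochhammer (z - of_nat (J + j)) j = (\<Prod>l\<in>{J<..J+j}. (z::complex) - of_nat l)"
proof (induction j)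
  case 0 then show ?case by simp
next
  case (Suc j)
  have "pochhammer (z - of_nat (J + Suc j)) (Suc j)
      = (z - of_nat (J + Suc j)) * pochhammer (z - of_nat (J + j)) j"
    by (simp add: pochhammer_rec algebra_simps)
  also have "\<dots> = (z - of_nat (J + Suc j)) * (\<Prod>l\<in>{J<..J+j}. z - of_nat l)" using Suc by simp
  also have "\<dots> = (\<Prod>l\<in>{J<..J+Suc j}. z - of_nat l)"
  proof -
    have "{J<..J+Suc j} = insert (J + Suc j) {J<..J+j}" by auto
    then show ?thesis by simp
  qed
  finally show ?case .
qed

lemma prod_nonzero_good:
  assumes "z = 0 \<or> z \<notin> \<int>"
  shows "(\<Prod>l\<in>A. (z::complex) - of_nat l) \<noteq> 0 \<or> 0 \<in> A"
proof -
  { fix l :: nat assume "l \<in> A" "l \<noteq> 0" "z - of_nat l = 0"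
    then have "z = of_nat l" by simp
    with assms \<open>l\<noteq>0\<close> have False by (auto simp: Ints_of_nat) }
  then show ?thesis by (cases "finite A") force+
qed

lemma poch_mult:
  assumes z: "z = 0 \<or> z \<notin> \<int>" and j: "j \<ge> 0"
  shows "poch_int z k * poch_int (z + of_int k) j = poch_int z (k + j)"
proof (cases "k \<ge> 0")
  case True
  obtain K J where K: "k = int K" and J: "j = int J" using True j
    by (metis nonneg_int_cases)
  have "nat (k + j) = K + J" using K J by simp
  then show ?thesis using K J by (simp add: poch_int_def pochhammer_product')
next
  case False
  obtain K where K: "k = - int K" "K > 0" using False
    by (metis neg_int_cases less_irrefl not_le of_nat_0_less_iff zero_less_Suc)
  obtain jj where J: "j = int jj" using j by (metis nonneg_int_cases)
  have nz: "(\<Prod>l\<in>{1..M}. z - of_nat l) \<noteq> 0" for M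
    using prod_nonzero_good[OF z, of "{1..M}"] by auto
  have pk: "poch_int z k = 1 / (\<Prod>l\<in>{1..K}. z - of_nat l)" using K by (simp add: poch_int_def)
  show ?thesis
  proof (cases "jj \<ge> K")
    case True
    obtain J' where jj: "jj = K + J'" using True by (metis le_add_diff_inverse)
    have "poch_int (z + of_int k) j = pochhammer (z - of_nat K) (K + J')"
      using K J jj by (simp add: poch_int_def nat_add_distrib)
    also have "\<dots> = (\<Prod>l\<in>{1..K}. z - of_nat l) * pochhammer z J'"
    proof -
      have "{0<..K} = {1..K}" by auto
      then show ?thesis using pochhammer_shift_prod[of z 0 K] by (simp add: pochhammer_product')
    qed
    finally have e: "poch_int (z + of_int k) j = (\<Prod>l\<in>{1..K}. z - of_nat l) * pochhammer z J'" .
    have "k + j = int J'" using K J jj by simp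
    then show ?thesis using pk e nz[of K] by (simp add: poch_int_def)
  next
    case False
    define J' where "J' = K - jj"
    have KJ: "K = J' + jj" "J' > 0" using False J'_def by auto
    have "poch_int (z + of_int k) j = (\<Prod>l\<in>{J'<..K}. z - of_nat l)"
    proof -
      have eq: "z + of_int k = z - of_nat (J' + jj)" using K KJ by simp
      have "poch_int (z + of_int k) j = pochhammer (z + of_int k) jj" using J by (simp add: poch_int_def)
      also have "\<dots> = pochhammer (z - of_nat (J' + jj)) jj" by (simp only: eq)
      finally show ?thesis using KJ pochhammer_shift_prod[of z J' jj] by simp
    qed
    moreover have "(\<Prod>l\<in>{1..K}. z - of_nat l) = (\<Prod>l\<in>{1..J'}. z - of_nat l) * (\<Prod>l\<in>{J'<..K}. z - of_nat l)"
    proof -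
      have "{1..K} = {1..J'} \<union> {J'<..K}" "{1..J'} \<inter> {J'<..K} = {}" using KJ by auto
      then show ?thesis by (simp add: prod.union_disjoint)
    qed
    moreover have "k + j = - int J'" using K J KJ by simp
    ultimately show ?thesis using pk nz[of K] nz[of J'] KJ
      by (simp add: poch_int_def)
  qed
qed



lemma poch_zero: "k > 0 \<Longrightarrow> poch_int 0 k = 0"
  by (simp add: poch_int_def pochhammer_0_left)

lemma poch_index:
  assumes "y = 0 \<or> y \<notin> \<int>"
  shows "(if g > 0 then poch_int (y - of_int n) g else 1) * poch_int y (- n)
       = (if g \<le> 0 then poch_int (y - of_int (n - g)) (- g) else 1) * poch_int y (- (n - g))"
proof (cases "g > 0")
  case True
  have "poch_int y (- n) * poch_int (y + of_int (-n)) g = poch_int y (- n + g)"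
    using poch_mult[OF assms, of g "-n"] True by simp
  then show ?thesis using True by (simp add: mult.commute)
next
  case False
  have "poch_int y (- (n - g)) * poch_int (y + of_int (- (n - g))) (-g) = poch_int y (- (n - g) + - g)"
    using poch_mult[OF assms, of "-g" "-(n-g)"] False by simp
  moreover have "y + of_int (- (n - g)) = y - of_int (n - g)" by simp
  ultimately show ?thesis using False by (simp only: mult.commute) simp
qed

lemma core_prod:
  fixes y :: "'n::finite \<Rightarrow> complex" and n g :: "'n \<Rightarrow> int"
  assumes good: "\<And>i. y i = 0 \<or> y i \<notin> \<int>"
  shows "(\<Prod>i\<in>{i. g i > 0}. poch_int (y i - of_int (n i)) (g i)) * (\<Prod>i\<in>UNIV. poch_int (y i) (- n i))
       = (\<Prod>i\<in>{i. g i \<le> 0}. poch_int (y i - of_int (n i - g i)) (- g i)) * (\<Prod>i\<in>UNIV. poch_int (y i) (- (n i - g i)))"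
proof -
  have "(\<Prod>i\<in>{i. g i > 0}. poch_int (y i - of_int (n i)) (g i)) * (\<Prod>i\<in>UNIV. poch_int (y i) (- n i))
     = (\<Prod>i\<in>UNIV. (if g i > 0 then poch_int (y i - of_int (n i)) (g i) else 1) * poch_int (y i) (- n i))"
    by (simp add: prod.distrib prod.inter_filter[symmetric])
  also have "\<dots> = (\<Prod>i\<in>UNIV. (if g i \<le> 0 then poch_int (y i - of_int (n i - g i)) (- g i) else 1) * poch_int (y i) (- (n i - g i)))"
    by (rule prod.cong[OF refl], rule poch_index[OF good])
  also have "\<dots> = (\<Prod>i\<in>{i. g i \<le> 0}. poch_int (y i - of_int (n i - g i)) (- g i)) * (\<Prod>i\<in>UNIV. poch_int (y i) (- (n i - g i)))"
    by (simp add: prod.distrib prod.inter_filter[symmetric])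
  finally show ?thesis .
qed



definition vsh :: "complex \<Rightarrow> int^'r \<Rightarrow> complex^'r" where
  "vsh lam d = (\<chi> a. lam * of_int (d$a))"

lemma vsh_add: "vsh lam (d + e) = vsh lam d + vsh lam e"
  by (simp add: vsh_def vec_eq_iff algebra_simps)

lemma vsh_inj: "lam \<noteq> 0 \<Longrightarrow> vsh lam d = vsh lam e \<Longrightarrow> d = e"
  by (simp add: vsh_def vec_eq_iff)

lemma Deig_shift:
  "Deig Q \<epsilon> i (\<kappa> + vsh lam d) = Deig Q \<epsilon> i \<kappa> + lam * of_int (dQ Q d i)"
  by (simp add: Deig_def vsh_def dQ_def algebra_simps sum.distrib sum_distrib_left)

lemma Deig_target:
  assumes inv: "invertible (Qp Q p)"
  shows "Deig Q \<epsilon> (p$b) (- Hcoef Q \<epsilon> p) = 0"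
proof -
  let ?M = "matrix_inv (Qp Q p)"
  have Minv: "?M ** Qp Q p = mat 1"
    using inv unfolding invertible_def matrix_inv_def by (rule someI2_ex) auto
  have h: "(\<Sum>a\<in>UNIV. ?M$b'$a * Q$a$(p$b)) = (if b' = b then 1 else 0)" for b'
  proof -
    have "(?M ** Qp Q p)$b'$b = (if b' = b then 1 else 0)" using Minv by (simp add: mat_def)
    then show ?thesis by (simp add: matrix_matrix_mult_def Qp_def)
  qed
  have hc: "(\<Sum>a\<in>UNIV. of_int (?M$b'$a) * of_int (Q$a$(p$b)) :: complex) = (if b' = b then 1 else 0)" for b'
  proof -
    have "(\<Sum>a\<in>UNIV. of_int (?M$b'$a) * of_int (Q$a$(p$b)) :: complex) = of_int (\<Sum>a\<in>UNIV. ?M$b'$a * Q$a$(p$b))"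
      by simp
    then show ?thesis using h[of b'] by simp
  qed
  have "(\<Sum>a\<in>UNIV. of_int (Q$a$(p$b)) * Hcoef Q \<epsilon> p $ a)
      = (\<Sum>a\<in>UNIV. \<Sum>b'\<in>UNIV. \<epsilon>$(p$b') * (of_int (?M$b'$a) * of_int (Q$a$(p$b))))"
    by (simp add: Hcoef_def sum_distrib_left algebra_simps)
  also have "\<dots> = (\<Sum>b'\<in>UNIV. \<epsilon>$(p$b') * (\<Sum>a\<in>UNIV. of_int (?M$b'$a) * of_int (Q$a$(p$b))))"
    by (subst sum.swap) (simp add: sum_distrib_left)
  also have "\<dots> = \<epsilon>$(p$b)" by (simp add: hc if_distrib cong: if_cong)
  finally show ?thesis by (simp add: Deig_def sum_negf)
qed

lemma cone_Lambda:
  fixes Q :: "int^'n^'r" and p :: "'n^'r"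
  assumes "p \<in> JK Q K" and nn: "\<And>b. dQ Q d (p$b) \<ge> 0"
  shows "d \<in> Lambda K"
  unfolding Lambda_def
proof (intro CollectI ballI)
  fix t assume "t \<in> K"
  then have "t \<in> cone_p Q p" using assms(1) by (auto simp: JK_def)
  then obtain c :: "real^'r" where c: "\<forall>b. c$b \<ge> 0" "t = (\<Sum>b\<in>UNIV. c$b *\<^sub>R col Q (p$b))"
    by (auto simp: cone_p_def)
  have "(\<Sum>a\<in>UNIV. real_of_int (d$a) * t$a) = (\<Sum>a\<in>UNIV. \<Sum>b\<in>UNIV. real_of_int (d$a) * (c$b * real_of_int (Q$a$(p$b))))"
    by (simp add: c(2) col_def sum_component sum_distrib_left)
  also have "\<dots> = (\<Sum>b\<in>UNIV. c$b * real_of_int (dQ Q d (p$b)))"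
    by (subst sum.swap) (simp add: dQ_def sum_distrib_left algebra_simps)
  also have "\<dots> \<ge> 0" using c(1) nn by (intro sum_nonneg mult_nonneg_nonneg) auto
  finally show "(\<Sum>a\<in>UNIV. real_of_int (d$a) * t$a) \<ge> 0" .
qed

lemma infsum_one_pt:
  fixes f :: "'a \<Rightarrow> complex"
  assumes "\<And>d. d \<in> A \<Longrightarrow> d \<noteq> d0 \<Longrightarrow> f d = 0"
  shows "f summable_on A" "infsum f A = (if d0 \<in> A then f d0 else 0)"
proof -
  have "infsum f A = infsum f (A \<inter> {d0})"
    by (rule infsum_cong_neutral) (use assms in auto)
  also have "\<dots> = (if d0 \<in> A then f d0 else 0)" by (cases "d0 \<in> A") auto
  finally show "infsum f A = (if d0 \<in> A then f d0 else 0)" .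
  have "f summable_on (A \<inter> {d0})" by simp
  then show "f summable_on A"
    by (rule summable_on_cong_neutral[THEN iffD1, rotated -1]) (use assms in auto)
qed

lemma infsum_zero_fun:
  fixes f :: "'a \<Rightarrow> complex"
  assumes "\<And>d. d \<in> A \<Longrightarrow> f d = 0"
  shows "f summable_on A" "infsum f A = 0"
  using assms by (auto intro: summable_on_0 infsum_0)



lemma infsum_finsum:
  fixes f :: "'p \<Rightarrow> 'a \<Rightarrow> complex"
  assumes "finite P" "\<And>p. p \<in> P \<Longrightarrow> f p summable_on A"
  shows "(\<lambda>d. \<Sum>p\<in>P. f p d) summable_on A \<and> infsum (\<lambda>d. \<Sum>p\<in>P. f p d) A = (\<Sum>p\<in>P. infsum (f p) A)"
  using assms
proof (induction P rule: finite_induct)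
  case empty then show ?case by simp
next
  case (insert x F)
  have s: "(\<lambda>d. \<Sum>p\<in>F. f p d) summable_on A"
    using insert by auto
  have "infsum (\<lambda>d. \<Sum>p\<in>insert x F. f p d) A = infsum (\<lambda>d. f x d + (\<Sum>p\<in>F. f p d)) A"
    using insert by simp
  also have "\<dots> = infsum (f x) A + infsum (\<lambda>d. \<Sum>p\<in>F. f p d) A"
    using insert s by (intro infsum_add) auto
  moreover have "(\<lambda>d. \<Sum>p\<in>insert x F. f p d) summable_on A"
    using insert s by (simp add: summable_on_add)
  ultimately show ?case using insert by simp
qed

lemma fexp_summable:
  fixes X :: "int^'r \<Rightarrow> complex"
  assumes "lam \<noteq> 0"
  shows "(\<lambda>d. X d * fexp \<kappa>0 (\<mu> + vsh lam d)) summable_on A"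
proof (cases "\<exists>e. \<mu> + vsh lam e = \<kappa>0")
  case True
  then obtain e where e: "\<mu> + vsh lam e = \<kappa>0" by blast
  show ?thesis
  proof (rule infsum_one_pt(1)[of A e])
    fix d assume "d \<noteq> e"
    then have "\<mu> + vsh lam d \<noteq> \<kappa>0" using e vsh_inj[OF assms, of d e] by auto
    then show "X d * fexp \<kappa>0 (\<mu> + vsh lam d) = 0" by (simp add: fexp_def)
  qed
next
  case False
  then show ?thesis by (intro infsum_zero_fun(1)) (auto simp: fexp_def)
qed

definition Sfun where
  "Sfun Q K \<epsilon> lam p \<mu> = infsum (\<lambda>d. (\<Prod>i\<in>UNIV. poch_int (Deig Q \<epsilon> i (\<mu> + vsh lam d) / lam) (- dQ Q d i))
       * fexp (- Hcoef Q \<epsilon> p) (\<mu> + vsh lam d)) (Lambda K)"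

lemma expmul_vsh: "expmul lam d g \<kappa> = g (\<kappa> + vsh lam d)"
  by (simp add: expmul_def vsh_def)

lemma Ihat_F:
  assumes "lam \<noteq> 0"
  shows "Ihat Q K \<epsilon> lam (F_alpha Q K \<epsilon> c) \<mu> = (\<Sum>p\<in>JK Q K. c p \<epsilon> * Sfun Q K \<epsilon> lam p \<mu>)"
proof -
  have "Ihat Q K \<epsilon> lam (F_alpha Q K \<epsilon> c) \<mu> = infsum (\<lambda>d. \<Sum>p\<in>JK Q K. c p \<epsilon> *
      ((\<Prod>i\<in>UNIV. poch_int (Deig Q \<epsilon> i (\<mu> + vsh lam d) / lam) (- dQ Q d i))
       * fexp (- Hcoef Q \<epsilon> p) (\<mu> + vsh lam d))) (Lambda K)"
    unfolding Ihat_def expmul_vsh poch_prod_op_def F_alpha_def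
    by (intro infsum_cong) (simp add: sum_distrib_right algebra_simps)
  also have "\<dots> = (\<Sum>p\<in>JK Q K. infsum (\<lambda>d. c p \<epsilon> *
      ((\<Prod>i\<in>UNIV. poch_int (Deig Q \<epsilon> i (\<mu> + vsh lam d) / lam) (- dQ Q d i))
       * fexp (- Hcoef Q \<epsilon> p) (\<mu> + vsh lam d))) (Lambda K))"
    by (rule infsum_finsum[THEN conjunct2]) (auto intro!: summable_on_cmult_right fexp_summable assms)
  also have "\<dots> = (\<Sum>p\<in>JK Q K. c p \<epsilon> * Sfun Q K \<epsilon> lam p \<mu>)"
    by (simp add: infsum_cmult_right' Sfun_def)
  finally show ?thesis .
qed



lemma dQ_diff: "dQ Q (e - g) i = dQ Q e i - dQ Q g i"
  by (simp add: dQ_def sum_subtractf algebra_simps)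

lemma per_p:
  fixes Q :: "int^'n^'r" and \<gamma> :: "int^'r"
  assumes pJK: "p \<in> JK Q K" and inv: "invertible (Qp Q p)" and lam: "lam \<noteq> 0"
    and gen: "generic_eps Q K \<epsilon> lam"
  shows "(\<Prod>i\<in>{i. dQ Q \<gamma> i > 0}. poch_int (Deig Q \<epsilon> i \<kappa> / lam) (dQ Q \<gamma> i)) * Sfun Q K \<epsilon> lam p \<kappa>
       = (\<Prod>i\<in>{i. dQ Q \<gamma> i \<le> 0}. poch_int (Deig Q \<epsilon> i (\<kappa> + vsh lam \<gamma>) / lam) (- dQ Q \<gamma> i))
          * Sfun Q K \<epsilon> lam p (\<kappa> + vsh lam \<gamma>)"
proof (cases "\<exists>e. \<kappa> + vsh lam e = - Hcoef Q \<epsilon> p")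
  case False
  have "Sfun Q K \<epsilon> lam p \<kappa> = 0" unfolding Sfun_def
    by (rule infsum_zero_fun(2)) (use False in \<open>auto simp: fexp_def\<close>)
  moreover have "Sfun Q K \<epsilon> lam p (\<kappa> + vsh lam \<gamma>) = 0" unfolding Sfun_def
  proof (rule infsum_zero_fun(2))
    fix d
    have "\<kappa> + vsh lam \<gamma> + vsh lam d = \<kappa> + vsh lam (\<gamma> + d)" by (simp add: vsh_add add.assoc)
    then have "\<kappa> + vsh lam \<gamma> + vsh lam d \<noteq> - Hcoef Q \<epsilon> p" using False by metis
    then show "(\<Prod>i\<in>UNIV. poch_int (Deig Q \<epsilon> i (\<kappa> + vsh lam \<gamma> + vsh lam d) / lam) (- dQ Q d i)) *
         fexp (- Hcoef Q \<epsilon> p) (\<kappa> + vsh lam \<gamma> + vsh lam d) = 0"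
      by (simp add: fexp_def)
  qed
  ultimately show ?thesis by simp
next
  case True
  then obtain e where e: "\<kappa> + vsh lam e = - Hcoef Q \<epsilon> p" by blast
  define y where "y i = Deig Q \<epsilon> i (- Hcoef Q \<epsilon> p) / lam" for i
  define n where "n i = dQ Q e i" for i
  define g where "g i = dQ Q \<gamma> i" for i
  have good: "y i = 0 \<or> y i \<notin> \<int>" for i
  proof (cases "\<exists>b. p$b = i")
    case True
    then obtain b where "p$b = i" by blast
    then show ?thesis using Deig_target[OF inv] by (auto simp: y_def)
  next
    case False
    then show ?thesis using gen pJK by (auto simp: y_def generic_eps_def)
  qed
  have Dk: "Deig Q \<epsilon> i \<kappa> / lam = y i - of_int (n i)" for i
  proof -
    have "Deig Q \<epsilon> i (- Hcoef Q \<epsilon> p) = Deig Q \<epsilon> i \<kappa> + lam * of_int (n i)"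
      using Deig_shift[of Q \<epsilon> i \<kappa> lam e] e by (simp add: n_def)
    then show ?thesis using lam by (simp add: y_def field_simps)
  qed
  have Dkg: "Deig Q \<epsilon> i (\<kappa> + vsh lam \<gamma>) / lam = y i - of_int (n i - g i)" for i
  proof -
    have "Deig Q \<epsilon> i (\<kappa> + vsh lam \<gamma>) / lam = Deig Q \<epsilon> i \<kappa> / lam + of_int (g i)"
      using lam by (simp add: Deig_shift g_def field_simps)
    then show ?thesis using Dk by simp
  qed
  define X where "X = (\<Prod>i\<in>{i. g i > 0}. poch_int (y i - of_int (n i)) (g i)) * (\<Prod>i\<in>UNIV. poch_int (y i) (- n i))"
  have X2: "X = (\<Prod>i\<in>{i. g i \<le> 0}. poch_int (y i - of_int (n i - g i)) (- g i)) * (\<Prod>i\<in>UNIV. poch_int (y i) (- (n i - g i)))"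
    unfolding X_def by (rule core_prod[OF good])
  have S1: "Sfun Q K \<epsilon> lam p \<kappa> = (if e \<in> Lambda K then (\<Prod>i\<in>UNIV. poch_int (y i) (- n i)) else 0)"
  proof -
    have "Sfun Q K \<epsilon> lam p \<kappa> = (if e \<in> Lambda K then (\<Prod>i\<in>UNIV. poch_int (Deig Q \<epsilon> i (\<kappa> + vsh lam e) / lam) (- dQ Q e i)) *
         fexp (- Hcoef Q \<epsilon> p) (\<kappa> + vsh lam e) else 0)"
      unfolding Sfun_def
    proof (rule infsum_one_pt(2))
      fix d assume "d \<noteq> e"
      then have "\<kappa> + vsh lam d \<noteq> - Hcoef Q \<epsilon> p" using e vsh_inj[OF lam, of d e] by (metis add_left_cancel)
      then show "(\<Prod>i\<in>UNIV. poch_int (Deig Q \<epsilon> i (\<kappa> + vsh lam d) / lam) (- dQ Q d i)) *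
         fexp (- Hcoef Q \<epsilon> p) (\<kappa> + vsh lam d) = 0" by (simp add: fexp_def)
    qed
    then show ?thesis using e by (simp add: fexp_def y_def n_def)
  qed
  have S2: "Sfun Q K \<epsilon> lam p (\<kappa> + vsh lam \<gamma>) = (if e - \<gamma> \<in> Lambda K then (\<Prod>i\<in>UNIV. poch_int (y i) (- (n i - g i))) else 0)"
  proof -
    have ee: "\<kappa> + vsh lam \<gamma> + vsh lam d = \<kappa> + vsh lam (\<gamma> + d)" for d by (simp add: vsh_add add.assoc)
    have "Sfun Q K \<epsilon> lam p (\<kappa> + vsh lam \<gamma>) = (if e - \<gamma> \<in> Lambda K then (\<Prod>i\<in>UNIV. poch_int (Deig Q \<epsilon> i (\<kappa> + vsh lam \<gamma> + vsh lam (e - \<gamma>)) / lam) (- dQ Q (e - \<gamma>) i)) *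
         fexp (- Hcoef Q \<epsilon> p) (\<kappa> + vsh lam \<gamma> + vsh lam (e - \<gamma>)) else 0)"
      unfolding Sfun_def
    proof (rule infsum_one_pt(2))
      fix d assume "d \<noteq> e - \<gamma>"
      then have "\<gamma> + d \<noteq> e" by auto
      then have "\<kappa> + vsh lam \<gamma> + vsh lam d \<noteq> - Hcoef Q \<epsilon> p" unfolding ee using e vsh_inj[OF lam, of "\<gamma> + d" e] by (metis add_left_cancel)
      then show "(\<Prod>i\<in>UNIV. poch_int (Deig Q \<epsilon> i (\<kappa> + vsh lam \<gamma> + vsh lam d) / lam) (- dQ Q d i)) *
         fexp (- Hcoef Q \<epsilon> p) (\<kappa> + vsh lam \<gamma> + vsh lam d) = 0" by (simp add: fexp_def)
    qed
    moreover have "\<kappa> + vsh lam \<gamma> + vsh lam (e - \<gamma>) = - Hcoef Q \<epsilon> p" unfolding ee using e by simp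
    ultimately show ?thesis by (simp add: fexp_def y_def n_def g_def dQ_diff)
  qed
  have LHS: "(\<Prod>i\<in>{i. dQ Q \<gamma> i > 0}. poch_int (Deig Q \<epsilon> i \<kappa> / lam) (dQ Q \<gamma> i)) * Sfun Q K \<epsilon> lam p \<kappa>
      = (if e \<in> Lambda K then X else 0)"
    unfolding S1 X_def Dk g_def by simp
  have RHS: "(\<Prod>i\<in>{i. dQ Q \<gamma> i \<le> 0}. poch_int (Deig Q \<epsilon> i (\<kappa> + vsh lam \<gamma>) / lam) (- dQ Q \<gamma> i))
          * Sfun Q K \<epsilon> lam p (\<kappa> + vsh lam \<gamma>) = (if e - \<gamma> \<in> Lambda K then X else 0)"
    unfolding S2 X2 Dkg g_def by simp
  have Z1: "X = 0" if nl: "e \<notin> Lambda K"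
  proof -
    obtain b where b: "dQ Q e (p$b) < 0" using cone_Lambda[OF pJK, of e] nl by (meson not_le)
    have "y (p$b) = 0" using Deig_target[OF inv] by (simp add: y_def)
    then have "poch_int (y (p$b)) (- n (p$b)) = 0" using b by (simp add: n_def poch_zero)
    then have "(\<Prod>i\<in>UNIV. poch_int (y i) (- n i)) = 0" by (meson UNIV_I finite prod_zero)
    then show ?thesis by (simp add: X_def)
  qed
  have Z2: "X = 0" if nl: "e - \<gamma> \<notin> Lambda K"
  proof -
    obtain b where b: "dQ Q (e - \<gamma>) (p$b) < 0" using cone_Lambda[OF pJK, of "e - \<gamma>"] nl by (meson not_le)
    have "y (p$b) = 0" using Deig_target[OF inv] by (simp add: y_def)
    then have "poch_int (y (p$b)) (- (n (p$b) - g (p$b))) = 0" using b by (simp add: n_def g_def dQ_diff poch_zero)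
    then have "(\<Prod>i\<in>UNIV. poch_int (y i) (- (n i - g i))) = 0" by (meson UNIV_I finite prod_zero)
    then show ?thesis by (simp add: X2)
  qed
  show ?thesis unfolding LHS RHS using Z1 Z2 by auto
qed

theorem mainTheorem6:
  fixes Q :: "int^'n^'r" and K :: "(real^'r) set" and t :: "real^'r"
    and \<epsilon> :: "complex^'n" and lam :: complex
    and c :: "'n^'r \<Rightarrow> complex^'n \<Rightarrow> complex" and \<gamma> :: "int^'r"
  assumes "is_chamber Q K" and "t \<in> K"
    and "\<forall>p\<in>JK Q K. invertible (Qp Q p)"
    and "lam \<noteq> 0"
    and "generic_eps Q K \<epsilon> lam"
    and "\<gamma> \<in> Lambda K"
  shows "PF Q \<epsilon> lam \<gamma> (Ihat Q K \<epsilon> lam (F_alpha Q K \<epsilon> c)) = (\<lambda>\<kappa>. 0)"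
proof
  fix \<kappa>
  let ?A = "\<Prod>i\<in>{i. dQ Q \<gamma> i > 0}. poch_int (Deig Q \<epsilon> i \<kappa> / lam) (dQ Q \<gamma> i)"
  let ?B = "\<Prod>i\<in>{i. dQ Q \<gamma> i \<le> 0}. poch_int (Deig Q \<epsilon> i (\<kappa> + vsh lam \<gamma>) / lam) (- dQ Q \<gamma> i)"
  have "PF Q \<epsilon> lam \<gamma> (Ihat Q K \<epsilon> lam (F_alpha Q K \<epsilon> c)) \<kappa>
      = ?A * Ihat Q K \<epsilon> lam (F_alpha Q K \<epsilon> c) \<kappa> - ?B * Ihat Q K \<epsilon> lam (F_alpha Q K \<epsilon> c) (\<kappa> + vsh lam \<gamma>)"
    by (simp add: PF_def poch_prod_op_def expmul_vsh)
  also have "\<dots> = (\<Sum>p\<in>JK Q K. c p \<epsilon> * (?A * Sfun Q K \<epsilon> lam p \<kappa> - ?B * Sfun Q K \<epsilon> lam p (\<kappa> + vsh lam \<gamma>)))"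
    using assms(4) by (simp add: Ihat_F sum_distrib_left sum_distrib_right sum_subtractf mult_ac right_diff_distrib)
  also have "\<dots> = 0"
    using per_p[OF _ _ assms(4) assms(5)] assms(3) by (simp add: per_p)
  finally show "PF Q \<epsilon> lam \<gamma> (Ihat Q K \<epsilon> lam (F_alpha Q K \<epsilon> c)) \<kappa> = 0" .
qed


end
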